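(* Let $\gamma=(\gamma_1,\dots,\gamma_b)$ be a parallel map on $V=V_1\oplus\cdots\oplus V_b$, $V_i\cong(\mathbb F_2)^m$, with $0\gamma=0$. Let $U$ be a subspace of $V$ of dimension $n-1$. Suppose that for every $i\notin J_U$, $\gamma_i$ is differentially $2^r$-uniform with $r<m$ and strongly $(r-1)$-anti-invariant, and for every $j\in J_U$, $\gamma_j$ is differentially $2^r$-uniform with $r<m-1$ and strongly $r$-anti-invariant. If $\gamma$ maps $\mathcal{LA}_U(W_1|W_2)$ onto a non-trivial partition $\mathcal L(W)$, then $W_1$, $W_2$, $W$ are walls and $W_1=W_2=W$; in particular $\mathcal{LA}_U(W_1|W_2)$ is linear.
   Context: Let $m,b>1$, $n=mb$, $V=(\mathbb F_2)^n=V_1\oplus\cdots\oplus V_b$, $V_i\cong(\mathbb F_2)^m$. Permutations act on the right. A parallel map is $\gamma\in\mathrm{Sym}(V)$ with $(v_1\oplus\cdots\oplus v_b)\gamma=v_1\gamma_1\oplus\cdots\oplus v_b\gamma_b$, $\gamma_i\in\mathrm{Sym}(V_i)$. A wall is $\bigoplus_{i\in I}V_i$ with $\emptyset\ne I\subsetneq\{1,\dots,b\}$. $J_U=\{j: V_j\cap U\subsetneq V_j\}$. $f:(\mathbb F_2)^m\to(\mathbb F_2)^m$ is differentially $\delta$-uniform if $\delta=\max_{a\ne0,b}|\{x:f(x+a)+f(x)=b\}|$; for $f(0)=0$, $f$ is strongly $s$-anti-invariant if for all subspaces $U',W'$ with $f(U')=W'$, either $\dim U'=\dim W'<m-s$ or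 $U'=W'=(\mathbb F_2)^m$. A permutation maps $\mathcal A$ onto $\mathcal B$ if it sends the blocks of $\mathcal A$ exactly onto those of $\mathcal B$; trivial partitions are the singleton partition and $\{V\}$. $\mathcal L(W)=\{W+v:v\in V\}$. For subspaces $W_1,W_2\subseteq U$, $\mathcal{LA}_U(W_1|W_2)=\{W_1+v:v\in U\}\cup\{(W_2+\bar v)+v:v\in U\}$ for any $\bar v\in V\setminus U$. *)

theory Defs
  imports Main
begin

text \<open>Vectors over F_2 are represented as functions nat => bool (bool = F_2,
  addition = exclusive or); (F_2)^d is the set of such functions vanishing at
  every coordinate >= d.\<close>

type_synonym vec = "nat \<Rightarrow> bool"

definition vzero :: vec where "vzero = (\<lambda>k. False)"

definition vadd :: "vec \<Rightarrow> vec \<Rightarrow> vec" where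
  "vadd u v = (\<lambda>k. u k \<noteq> v k)"

definition F2space :: "nat \<Rightarrow> vec set" where
  "F2space d = {v. \<forall>k\<ge>d. \<not> v k}"

text \<open>Linear subspaces of (F_2)^d (over F_2 these are exactly the subsets
  containing 0 and closed under addition).\<close>
definition subspace :: "nat \<Rightarrow> vec set \<Rightarrow> bool" where
  "subspace d S \<longleftrightarrow> S \<subseteq> F2space d \<and> vzero \<in> S \<and> (\<forall>u\<in>S. \<forall>v\<in>S. vadd u v \<in> S)"

definition sdim :: "vec set \<Rightarrow> nat" where
  "sdim S = (THE k. card S = 2 ^ k)"

text \<open>The block V_i (0-based i) of V = (F_2)^(m*b): vectors supported on the
  coordinates i*m, ..., (i+1)*m - 1.\<close>
definition blk :: "nat \<Rightarrow> nat \<Rightarrow> vec set" where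
  "blk m i = {v. \<forall>k. v k \<longrightarrow> i * m \<le> k \<and> k < Suc i * m}"

definition wall :: "nat \<Rightarrow> nat \<Rightarrow> vec set \<Rightarrow> bool" where
  "wall m b W \<longleftrightarrow> (\<exists>I. I \<noteq> {} \<and> I \<subset> {..<b} \<and>
     W = {v \<in> F2space (m * b). \<forall>k. v k \<longrightarrow> k div m \<in> I})"

definition JU :: "nat \<Rightarrow> nat \<Rightarrow> vec set \<Rightarrow> nat set" where
  "JU m b U = {j \<in> {..<b}. blk m j \<inter> U \<subset> blk m j}"

definition component :: "nat \<Rightarrow> nat \<Rightarrow> vec \<Rightarrow> vec" where
  "component m i v = (\<lambda>k. k < m \<and> v (i * m + k))"

definition parallel :: "nat \<Rightarrow> nat \<Rightarrow> (nat \<Rightarrow> vec \<Rightarrow> vec) \<Rightarrow> vec \<Rightarrow> vec" where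
  "parallel m b \<gamma> v = (\<lambda>k. k < m * b \<and> \<gamma> (k div m) (component m (k div m) v) (k mod m))"

definition diff_uniform :: "nat \<Rightarrow> (vec \<Rightarrow> vec) \<Rightarrow> nat \<Rightarrow> bool" where
  "diff_uniform m f \<delta> \<longleftrightarrow>
     \<delta> = Max {card {x \<in> F2space m. vadd (f (vadd x a)) (f x) = c} | a c.
               a \<in> F2space m \<and> a \<noteq> vzero \<and> c \<in> F2space m}"

definition strongly_anti_invariant :: "nat \<Rightarrow> nat \<Rightarrow> (vec \<Rightarrow> vec) \<Rightarrow> bool" where
  "strongly_anti_invariant m s f \<longleftrightarrow> f vzero = vzero \<and>
     (\<forall>U' W'. subspace m U' \<and> subspace m W' \<and> f ` U' = W' \<longrightarrow>
        (sdim U' = sdim W' \<and> sdim U' < m - s) \<or> (U' = F2space m \<and> W' = F2space m))"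

definition coset :: "vec set \<Rightarrow> vec \<Rightarrow> vec set" where
  "coset W v = (\<lambda>w. vadd w v) ` W"

definition cosets :: "nat \<Rightarrow> vec set \<Rightarrow> vec set set" where
  "cosets d W = {coset W v | v. v \<in> F2space d}"

text \<open>LA_U(W1|W2), with the auxiliary vector vbar (assumed outside U).\<close>
definition LA :: "vec set \<Rightarrow> vec set \<Rightarrow> vec set \<Rightarrow> vec \<Rightarrow> vec set set" where
  "LA U W1 W2 vbar = {coset W1 v | v. v \<in> U} \<union> {coset (coset W2 vbar) v | v. v \<in> U}"

definition maps_onto :: "(vec \<Rightarrow> vec) \<Rightarrow> vec set set \<Rightarrow> vec set set \<Rightarrow> bool" where
  "maps_onto g A B \<longleftrightarrow> (\<lambda>X. g ` X) ` A = B"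

definition trivial_partition :: "nat \<Rightarrow> vec set set \<Rightarrow> bool" where
  "trivial_partition d P \<longleftrightarrow> P = {{v} | v. v \<in> F2space d} \<or> P = {F2space d}"

end

theory Submission
  imports Defs
begin



lemma vadd_comm: "vadd u v = vadd v u" by (auto simp: vadd_def fun_eq_iff)
lemma vadd_assoc: "vadd (vadd u v) w = vadd u (vadd v w)" by (auto simp: vadd_def fun_eq_iff)
lemma vadd_self[simp]: "vadd u u = vzero" by (auto simp: vadd_def vzero_def fun_eq_iff)
lemma vadd_zero[simp]: "vadd u vzero = u" "vadd vzero u = u" by (auto simp: vadd_def vzero_def fun_eq_iff)
lemma vadd_cancel[simp]: "vadd (vadd u v) v = u" "vadd u (vadd u v) = v" by (auto simp: vadd_def fun_eq_iff)
lemma vadd_eq_zero_iff: "vadd u v = vzero \<longleftrightarrow> u = v" by (auto simp: vadd_def vzero_def fun_eq_iff)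

lemma F2space_vadd: "u \<in> F2space d \<Longrightarrow> v \<in> F2space d \<Longrightarrow> vadd u v \<in> F2space d"
  by (auto simp: F2space_def vadd_def)
lemma F2space_vzero[simp]: "vzero \<in> F2space d" by (auto simp: F2space_def vzero_def)

lemma F2space_eq: "F2space d = (\<lambda>S k. k \<in> S) ` Pow {..<d}"
proof
  show "F2space d \<subseteq> (\<lambda>S k. k \<in> S) ` Pow {..<d}"
  proof
    fix v assume v: "v \<in> F2space d"
    have "v = (\<lambda>k. k \<in> {k. v k})" by auto
    moreover have "{k. v k} \<in> Pow {..<d}" using v by (auto simp: F2space_def not_le[symmetric])
    ultimately show "v \<in> (\<lambda>S k. k \<in> S) ` Pow {..<d}" by blast
  qed
qed (auto simp: F2space_def)

lemma finite_F2space[simp]: "finite (F2space d)" by (simp add: F2space_eq)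

lemma card_F2space: "card (F2space d) = 2 ^ d"
proof -
  have "inj_on (\<lambda>S k. k \<in> S) (Pow {..<d})" by (auto simp: inj_on_def fun_eq_iff)
  then show ?thesis by (simp add: F2space_eq card_image card_Pow)
qed



lemma subspace_finite: "subspace d S \<Longrightarrow> finite S"
  unfolding subspace_def using finite_subset[OF _ finite_F2space] by blast

lemma F2space_Suc: "v \<in> F2space (Suc d) \<Longrightarrow> \<not> v d \<Longrightarrow> v \<in> F2space d"
  unfolding F2space_def
proof (intro CollectI allI impI)
  fix k assume h: "v \<in> {v. \<forall>k\<ge>Suc d. \<not> v k}" "\<not> v d" "d \<le> k"
  show "\<not> v k"
  proof (cases "k = d")
    case True then show ?thesis using h by simp
  next
    case False then have "Suc d \<le> k" using h(3) by simp
    then show ?thesis using h(1) by simp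
  qed
qed

lemma subspace_card_pow: "subspace d S \<Longrightarrow> \<exists>k. card S = 2 ^ k"
proof (induction d arbitrary: S)
  case 0
  have "F2space 0 = {vzero}" by (auto simp: F2space_def vzero_def)
  then have "S = {vzero}" using 0 by (auto simp: subspace_def)
  then show ?case by (intro exI[of _ 0]) simp
next
  case (Suc d)
  define S' where "S' = {v \<in> S. \<not> v d}"
  have S: "S \<subseteq> F2space (Suc d)" "vzero \<in> S" "\<forall>u\<in>S. \<forall>v\<in>S. vadd u v \<in> S"
    using Suc.prems unfolding subspace_def by blast+
  have "S' \<subseteq> F2space d"
  proof
    fix v assume v: "v \<in> S'"
    then have "v \<in> F2space (Suc d)" "\<not> v d" using S(1) unfolding S'_def by blast+
    then show "v \<in> F2space d" by (rule F2space_Suc)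
  qed
  moreover have "vzero \<in> S'" using S(2) by (simp add: S'_def vzero_def)
  moreover have "\<forall>u\<in>S'. \<forall>v\<in>S'. vadd u v \<in> S'"
  proof (intro ballI)
    fix u v assume "u \<in> S'" "v \<in> S'"
    then have "u \<in> S" "v \<in> S" "\<not> u d" "\<not> v d" unfolding S'_def by blast+
    moreover have "\<not> vadd u v d" using calculation by (simp add: vadd_def)
    ultimately show "vadd u v \<in> S'" using S(3) by (simp add: S'_def)
  qed
  ultimately have sub': "subspace d S'" unfolding subspace_def by blast
  obtain k where k: "card S' = 2 ^ k" using Suc.IH[OF sub'] by blast
  show ?case
  proof (cases "\<exists>v0\<in>S. v0 d")
    case False
    then have "S = S'" by (auto simp: S'_def)
    then show ?thesis using k by auto
  next
    case True
    then obtain v0 where v0: "v0 \<in> S" "v0 d" by blast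
    have img: "(\<lambda>v. vadd v v0) ` S' = {v \<in> S. v d}"
    proof
      show "(\<lambda>v. vadd v v0) ` S' \<subseteq> {v \<in> S. v d}"
      proof
        fix x assume "x \<in> (\<lambda>v. vadd v v0) ` S'"
        then obtain v where v: "v \<in> S" "\<not> v d" "x = vadd v v0" unfolding S'_def by blast
        have "vadd v v0 \<in> S" using S(3) v(1) v0(1) by blast
        then have "x \<in> S" using v(3) by simp
        moreover have "x d" using v v0 by (simp add: vadd_def)
        ultimately show "x \<in> {v \<in> S. v d}" by simp
      qed
      show "{v \<in> S. v d} \<subseteq> (\<lambda>v. vadd v v0) ` S'"
      proof
        fix v assume v: "v \<in> {v \<in> S. v d}"
        have "vadd v v0 \<in> S" using S(3) v v0(1) by blast
        moreover have "\<not> vadd v v0 d" using v v0(2) by (simp add: vadd_def)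
        ultimately
        have "vadd v v0 \<in> S'" by (simp add: S'_def)
        moreover have "v = vadd (vadd v v0) v0" by simp
        ultimately show "v \<in> (\<lambda>v. vadd v v0) ` S'" by blast
      qed
    qed
    have inj: "inj_on (\<lambda>v. vadd v v0) S'"
    proof (rule inj_onI)
      fix x y assume "vadd x v0 = vadd y v0"
      then have "vadd (vadd x v0) v0 = vadd (vadd y v0) v0" by simp
      then show "x = y" by simp
    qed
    have fin: "finite S" using subspace_finite[OF Suc.prems] .
    have "S = S' \<union> {v \<in> S. v d}" by (auto simp: S'_def)
    moreover have "S' \<inter> {v \<in> S. v d} = {}" by (auto simp: S'_def)
    moreover have "finite S'" "finite {v \<in> S. v d}" using fin by (simp_all add: S'_def)
    ultimately have "card S = card S' + card {v \<in> S. v d}"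
      using card_Un_disjoint by metis
    also have "card {v \<in> S. v d} = card S'" using card_image[OF inj] img by simp
    finally have "card S = 2 ^ Suc k" using k by simp
    then show ?thesis by blast
  qed
qed



lemma sdim_eq: "card S = 2 ^ k \<Longrightarrow> sdim S = k"
  unfolding sdim_def by (rule the_equality) auto

lemma coset_mem: "vzero \<in> W \<Longrightarrow> v \<in> coset W v"
  unfolding coset_def by (rule image_eqI[of _ _ vzero]) simp_all

lemma vadd_swap: "vadd (vadd a c) (vadd b c) = vadd a b"
  by (auto simp: vadd_def fun_eq_iff)

lemma coset_sum: "subspace d W \<Longrightarrow> y1 \<in> coset W c \<Longrightarrow> y2 \<in> coset W c \<Longrightarrow> vadd y1 y2 \<in> W"
  unfolding coset_def subspace_def by (auto simp: vadd_swap)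

lemma coset_zero_eq: "subspace d W \<Longrightarrow> vzero \<in> coset W c \<Longrightarrow> coset W c = W"
proof -
  assume W: "subspace d W" and z: "vzero \<in> coset W c"
  then obtain w where w: "w \<in> W" "vzero = vadd w c" by (auto simp: coset_def)
  then have "vadd w c = vzero" by simp
  then have "c = w" by (simp add: vadd_eq_zero_iff)
  then have cW: "c \<in> W" using w by simp
  show ?thesis
  proof
    show "coset W c \<subseteq> W" using W cW unfolding coset_def subspace_def by auto
    show "W \<subseteq> coset W c"
    proof
      fix x assume x: "x \<in> W"
      then have "vadd x c \<in> W" using W cW unfolding subspace_def by auto
      moreover have "x = vadd (vadd x c) c" by simp
      ultimately show "x \<in> coset W c" unfolding coset_def by blast
    qed
  qed
qed

lemma card_coset: "card (coset W c) = card W"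
  unfolding coset_def
proof (rule card_image, rule inj_onI)
  fix x y assume "vadd x c = vadd y c"
  then have "vadd (vadd x c) c = vadd (vadd y c) c" by simp
  then show "x = y" by simp
qed

lemma coset_subset: "subspace d W \<Longrightarrow> c \<in> F2space d \<Longrightarrow> coset W c \<subseteq> F2space d"
  unfolding coset_def subspace_def using F2space_vadd by blast




definition emb :: "nat \<Rightarrow> nat \<Rightarrow> vec \<Rightarrow> vec" where
  "emb m i t = (\<lambda>k. i * m \<le> k \<and> k < Suc i * m \<and> t (k - i * m))"

lemma comp_vadd: "component m i (vadd u v) = vadd (component m i u) (component m i v)"
  by (auto simp: component_def vadd_def fun_eq_iff)

lemma comp_vzero[simp]: "component m i vzero = vzero"
  by (auto simp: component_def vzero_def fun_eq_iff)

lemma comp_in[simp]: "component m i v \<in> F2space m"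
  by (auto simp: component_def F2space_def)

lemma div_eq_bounds: "0 < m \<Longrightarrow> k div m = i \<Longrightarrow> i * m \<le> k \<and> k < Suc i * m"
proof -
  assume m: "0 < m" and i: "k div m = i"
  have e: "k = i * m + k mod m" using i div_mult_mod_eq[of k m] by simp
  have r: "k mod m < m" using m by simp
  have "i * m \<le> k" using e by linarith
  moreover have "k < Suc i * m" using e r by simp
  ultimately show ?thesis by simp
qed

lemma bounds_div_eq: "i * m \<le> k \<Longrightarrow> k < Suc i * m \<Longrightarrow> k div m = i"
proof -
  assume a: "i * m \<le> k" "k < Suc i * m"
  have m: "0 < m" using a by (cases "m = 0") auto
  have r: "k - i * m < m" using a by simp
  have "(k - i * m + i * m) div m = i" using m r by simp
  moreover have "k - i * m + i * m = k" using a by simp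
  ultimately show ?thesis by simp
qed

lemma vec_eq:
  assumes m: "0 < m" and x: "x \<in> F2space (m * b)" and y: "y \<in> F2space (m * b)"
    and c: "\<forall>i<b. component m i x = component m i y"
  shows "x = y"
proof
  fix k
  show "x k = y k"
  proof (cases "k < m * b")
    case True
    define i where "i = k div m"
    have ib: "i < b" using True m unfolding i_def by (simp add: div_less_iff_less_mult mult.commute)
    have e: "i * m + k mod m = k" unfolding i_def by simp
    have c1: "component m i x (k mod m) = x k" using m e unfolding component_def by simp
    have c2: "component m i y (k mod m) = y k" using m e unfolding component_def by simp
    have c3: "component m i x = component m i y" using c ib by simp
    show ?thesis using c1 c2 c3 by simp
  next
    case False
    then show ?thesis using x y by (auto simp: F2space_def)
  qed
qed

lemma parallel_in[simp]: "parallel m b \<gamma> x \<in> F2space (m * b)"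
  by (auto simp: parallel_def F2space_def)

lemma comp_parallel:
  assumes i: "i < b" and g: "\<gamma> i (component m i x) \<in> F2space m"
  shows "component m i (parallel m b \<gamma> x) = \<gamma> i (component m i x)"
proof
  fix k
  show "component m i (parallel m b \<gamma> x) k = \<gamma> i (component m i x) k"
  proof (cases "k < m")
    case True
    have d: "(i * m + k) div m = i" by (rule bounds_div_eq) (use True in auto)
    have md: "(i * m + k) mod m = k" using True by simp
    have "Suc i * m \<le> b * m" using i by (intro mult_le_mono1) simp
    then have lt: "i * m + k < m * b" using True by (simp add: mult.commute)
    show ?thesis using True d md lt by (simp add: component_def parallel_def)
  next
    case False
    then show ?thesis using g by (simp add: component_def F2space_def)
  qed
qed

lemma comp_emb: "t \<in> F2space m \<Longrightarrow> component m i (emb m i t) = t"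
proof
  fix k assume t: "t \<in> F2space m"
  show "component m i (emb m i t) k = t k"
  proof (cases "k < m")
    case True then show ?thesis by (simp add: component_def emb_def)
  next
    case False then show ?thesis using t by (simp add: component_def emb_def F2space_def)
  qed
qed

lemma comp_emb_other:
  assumes "j \<noteq> i" shows "component m j (emb m i t) = vzero"
proof
  fix k
  show "component m j (emb m i t) k = vzero k"
  proof (cases "k < m \<and> i * m \<le> j * m + k \<and> j * m + k < Suc i * m")
    case True
    then have "(j * m + k) div m = i" by (intro bounds_div_eq) auto
    moreover have "(j * m + k) div m = j" using True by (intro bounds_div_eq) auto
    ultimately show ?thesis using assms by simp
  next
    case False
    then show ?thesis by (auto simp: component_def emb_def vzero_def)
  qed
qed

lemma emb_in: "i < b \<Longrightarrow> emb m i t \<in> F2space (m * b)"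
proof -
  assume i: "i < b"
  have "Suc i * m \<le> b * m" using i by (intro mult_le_mono1) simp
  then show ?thesis by (auto simp: emb_def F2space_def mult.commute)
qed

lemma emb_vadd: "emb m i (vadd s t) = vadd (emb m i s) (emb m i t)"
  by (auto simp: emb_def vadd_def fun_eq_iff)

lemma emb_vzero[simp]: "emb m i vzero = vzero"
  by (auto simp: emb_def vzero_def fun_eq_iff)

lemma blk_emb: "v \<in> blk m i \<Longrightarrow> v = emb m i (component m i v)"
  unfolding blk_def emb_def component_def
proof -
  assume h: "v \<in> {v. \<forall>k. v k \<longrightarrow> i * m \<le> k \<and> k < Suc i * m}"
  show "v = (\<lambda>k. i * m \<le> k \<and> k < Suc i * m \<and> (\<lambda>k. k < m \<and> v (i * m + k)) (k - i * m))"
  proof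
    fix k
    show "v k = (i * m \<le> k \<and> k < Suc i * m \<and> (\<lambda>k. k < m \<and> v (i * m + k)) (k - i * m))"
      using h by auto
  qed
qed

lemma emb_blk: "emb m i t \<in> blk m i"
  by (auto simp: emb_def blk_def)

lemma parallel_emb:
  assumes m: "0 < m" and i: "i < b" and t: "t \<in> F2space m"
    and g0: "\<forall>j<b. \<gamma> j vzero = vzero"
    and gin: "\<forall>j<b. \<forall>v\<in>F2space m. \<gamma> j v \<in> F2space m"
  shows "parallel m b \<gamma> (emb m i t) = emb m i (\<gamma> i t)"
proof (rule vec_eq[OF m parallel_in emb_in[OF i]], intro allI impI)
  fix j assume j: "j < b"
  have c: "component m j (parallel m b \<gamma> (emb m i t)) = \<gamma> j (component m j (emb m i t))"
    using j gin by (intro comp_parallel) auto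
  show "component m j (parallel m b \<gamma> (emb m i t)) = component m j (emb m i (\<gamma> i t))"
  proof (cases "j = i")
    case True
    then show ?thesis using c t gin i by (simp add: comp_emb)
  next
    case False
    then show ?thesis using c g0 j by (simp add: comp_emb_other)
  qed
qed

lemma wall_sub:
  assumes m: "0 < m" and X: "subspace (m * b) X" and J: "finite J"
  shows "(\<forall>i\<in>J. blk m i \<subseteq> X) \<Longrightarrow> v \<in> F2space (m * b) \<Longrightarrow> (\<forall>k. v k \<longrightarrow> k div m \<in> J) \<Longrightarrow> v \<in> X"
  using J
proof (induction J arbitrary: v rule: finite_induct)
  case empty
  then have "v = vzero" by (auto simp: vzero_def fun_eq_iff)
  then show ?case using X by (simp add: subspace_def)
next
  case (insert i J)
  define v1 where "v1 = (\<lambda>k. v k \<and> k div m \<noteq> i)"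
  define v2 where "v2 = (\<lambda>k. v k \<and> k div m = i)"
  have "v1 \<in> F2space (m * b)" using insert.prems(2) by (auto simp: v1_def F2space_def)
  moreover have "\<forall>k. v1 k \<longrightarrow> k div m \<in> J" using insert.prems(3) by (auto simp: v1_def)
  ultimately have v1X: "v1 \<in> X" using insert.IH insert.prems(1) by blast
  have "v2 \<in> blk m i" unfolding blk_def v2_def
  proof (intro CollectI allI impI)
    fix k assume "v k \<and> k div m = i"
    then show "i * m \<le> k \<and> k < Suc i * m" using div_eq_bounds[OF m, of k i] by simp
  qed
  then have v2X: "v2 \<in> X" using insert.prems(1) by blast
  have "v = vadd v1 v2" by (auto simp: v1_def v2_def vadd_def fun_eq_iff)
  then show ?case using X v1X v2X by (simp add: subspace_def)
qed

lemma hyperplane: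
  assumes U: "subspace n U" and c: "card U = 2 ^ (n - 1)" and n: "0 < n"
    and x: "x \<in> F2space n" "x \<notin> U" and y: "y \<in> F2space n" "y \<notin> U"
  shows "vadd x y \<in> U"
proof -
  have sub: "U \<union> coset U y \<subseteq> F2space n" using U coset_subset[OF U y(1)] by (auto simp: subspace_def)
  have disj: "U \<inter> coset U y = {}"
  proof (rule ccontr)
    assume "U \<inter> coset U y \<noteq> {}"
    then obtain z u where z: "z \<in> U" "u \<in> U" "z = vadd u y" by (auto simp: coset_def)
    then have "vadd z u = y" by (auto simp: vadd_def fun_eq_iff)
    moreover have "vadd z u \<in> U" using U z by (simp add: subspace_def)
    ultimately show False using y by simp
  qed
  have fU: "finite U" using subspace_finite[OF U] .
  have fC: "finite (coset U y)" using fU by (simp add: coset_def)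
  have "card (U \<union> coset U y) = 2 ^ (n - 1) + 2 ^ (n - 1)"
    using card_Un_disjoint[OF fU fC disj] c card_coset by simp
  also have "\<dots> = 2 ^ n" using n by (cases n) auto
  finally have "card (U \<union> coset U y) = card (F2space n)" by (simp add: card_F2space)
  then have "U \<union> coset U y = F2space n" using card_subset_eq[OF finite_F2space sub] by simp
  then have "x \<in> coset U y" using x by blast
  then obtain u where u: "u \<in> U" "x = vadd u y" by (auto simp: coset_def)
  then show ?thesis by simp
qed



lemma fibre_le:
  assumes du: "diff_uniform m f \<delta>" and a: "a \<in> F2space m" "a \<noteq> vzero" and c: "c \<in> F2space m"
  shows "card {x \<in> F2space m. vadd (f (vadd x a)) (f x) = c} \<le> \<delta>"
proof -
  let ?S = "{card {x \<in> F2space m. vadd (f (vadd x a)) (f x) = c} | a c.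
               a \<in> F2space m \<and> a \<noteq> vzero \<and> c \<in> F2space m}"
  have "?S \<subseteq> (\<lambda>(a, c). card {x \<in> F2space m. vadd (f (vadd x a)) (f x) = c}) ` (F2space m \<times> F2space m)"
    by auto
  then have fin: "finite ?S" by (rule finite_subset) simp
  have mem: "card {x \<in> F2space m. vadd (f (vadd x a)) (f x) = c} \<in> ?S" using a c by blast
  have "\<delta> = Max ?S" using du by (simp add: diff_uniform_def)
  then show ?thesis using Max_ge[OF fin mem] by simp
qed

lemma claim2_core:
  assumes du: "diff_uniform m f \<delta>" and a: "a \<in> F2space m" "a \<noteq> vzero" and c: "c \<in> F2space m"
    and T: "T \<subseteq> F2space m" and D: "\<forall>t\<in>T. vadd (f (vadd t a)) (f t) = c"
  shows "card T \<le> \<delta>"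
proof -
  have "T \<subseteq> {x \<in> F2space m. vadd (f (vadd x a)) (f x) = c}" using T D by blast
  then have "card T \<le> card {x \<in> F2space m. vadd (f (vadd x a)) (f x) = c}"
    by (intro card_mono) auto
  then show ?thesis using fibre_le[OF du a c] by linarith
qed

lemma claim1_core:
  assumes inj: "inj_on f (F2space m)" and into: "\<forall>v\<in>F2space m. f v \<in> F2space m"
    and du: "diff_uniform m f (2 ^ r)"
    and K: "subspace m K" and L: "subspace m L" and fKL: "f ` K = L"
    and sai: "strongly_anti_invariant m s f"
    and T: "T \<subseteq> F2space m" and al: "\<alpha> \<in> K" "\<alpha> \<noteq> vzero"
    and D: "\<forall>t\<in>T. vadd (f (vadd t \<alpha>)) (f t) \<in> L"
    and big: "2 ^ m \<le> card T * 2 ^ (s + 1 - r)" and rs: "r \<le> s + 1"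
  shows "K = F2space m"
proof -
  obtain k where k: "card K = 2 ^ k" using subspace_card_pow[OF K] by blast
  have KF: "K \<subseteq> F2space m" using K by (simp add: subspace_def)
  have LF: "L \<subseteq> F2space m" using L by (simp add: subspace_def)
  have alF: "\<alpha> \<in> F2space m" using al KF by blast
  have cL: "card L = 2 ^ k" using k fKL card_image[OF inj_on_subset[OF inj KF]] by simp
  have fL: "finite L" using subspace_finite[OF L] .
  have z: "vzero \<in> L" using L by (simp add: subspace_def)
  have cL0: "card (L - {vzero}) = 2 ^ k - 1" using cL fL z by simp
  define fib where "fib c = {x \<in> F2space m. vadd (f (vadd x \<alpha>)) (f x) = c}" for c
  have Tsub: "T \<subseteq> (\<Union>c\<in>L - {vzero}. fib c)"
  proof
    fix t assume t: "t \<in> T"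
    then have tF: "t \<in> F2space m" using T by blast
    have DL: "vadd (f (vadd t \<alpha>)) (f t) \<in> L" using D t by blast
    have "vadd (f (vadd t \<alpha>)) (f t) \<noteq> vzero"
    proof
      assume "vadd (f (vadd t \<alpha>)) (f t) = vzero"
      then have "f (vadd t \<alpha>) = f t" by (simp add: vadd_eq_zero_iff)
      moreover have "vadd t \<alpha> \<in> F2space m" using tF alF by (rule F2space_vadd)
      ultimately have "vadd t \<alpha> = t" using inj tF by (simp add: inj_on_def)
      then have "vadd t (vadd t \<alpha>) = vadd t t" by simp
      then show False using al(2) by simp
    qed
    then show "t \<in> (\<Union>c\<in>L - {vzero}. fib c)" using DL tF unfolding fib_def by blast
  qed
  have "card T \<le> card (\<Union>c\<in>L - {vzero}. fib c)"
    by (rule card_mono[OF _ Tsub]) (simp add: fib_def fL)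
  also have "\<dots> \<le> (\<Sum>c\<in>L - {vzero}. card (fib c))" using fL by (intro card_UN_le) simp
  also have "\<dots> \<le> card (L - {vzero}) * 2 ^ r"
  proof -
    have "card (fib c) \<le> 2 ^ r" if c: "c \<in> L - {vzero}" for c
    proof -
      have "c \<in> F2space m" using LF c by blast
      then show "card (fib c) \<le> 2 ^ r" unfolding fib_def using fibre_le[OF du alF al(2)] by blast
    qed
    then show ?thesis using sum_bounded_above[of "L - {vzero}" "\<lambda>c. card (fib c)" "2 ^ r"] by simp
  qed
  finally have cT: "card T \<le> (2 ^ k - 1) * 2 ^ r" using cL0 by simp
  have "(2::nat) ^ k - 1 < 2 ^ k" by simp
  then have "(2 ^ k - 1) * 2 ^ r < (2::nat) ^ k * 2 ^ r" by simp
  then have "card T < 2 ^ k * 2 ^ r" using cT by linarith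
  then have "card T * 2 ^ (s + 1 - r) < 2 ^ k * 2 ^ r * 2 ^ (s + 1 - r)" by simp
  also have "\<dots> = 2 ^ (k + s + 1)" using rs by (simp add: power_add[symmetric])
  finally have "(2::nat) ^ m < 2 ^ (k + s + 1)" using big by linarith
  then have mk: "m < k + s + 1" using power_strict_increasing_iff[of "2::nat" m "k + s + 1"] by simp
  have sd: "sdim K = k" using sdim_eq[OF k] .
  have "(sdim K = sdim L \<and> sdim K < m - s) \<or> (K = F2space m \<and> L = F2space m)"
    using sai K L fKL unfolding strongly_anti_invariant_def by blast
  then show ?thesis using sd mk by auto
qed



lemma coset_vzero[simp]: "coset X vzero = X"
  unfolding coset_def by simp

lemma coset_coset: "coset (coset X a) c = coset X (vadd a c)"
  unfolding coset_def image_image by (simp add: vadd_assoc)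

lemma coset_single: "coset {vzero} v = {v}"
  unfolding coset_def by simp

lemma coset_full: "v \<in> F2space d \<Longrightarrow> coset (F2space d) v = F2space d"
proof
  assume v: "v \<in> F2space d"
  show "coset (F2space d) v \<subseteq> F2space d" using v F2space_vadd unfolding coset_def by blast
  show "F2space d \<subseteq> coset (F2space d) v"
  proof
    fix x assume x: "x \<in> F2space d"
    have "vadd x v \<in> F2space d" using x v by (rule F2space_vadd)
    moreover have "x = vadd (vadd x v) v" by simp
    ultimately show "x \<in> coset (F2space d) v" unfolding coset_def by blast
  qed
qed

lemma comp_at: "0 < m \<Longrightarrow> component m (k div m) v (k mod m) = v k"
  unfolding component_def by simp



theorem corollary3p11:
  fixes m b r :: nat and \<gamma> :: "nat \<Rightarrow> vec \<Rightarrow> vec"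
    and U W1 W2 W :: "vec set" and vbar :: vec
  assumes "m > 1" and "b > 1"
    and perm: "\<forall>i<b. bij_betw (\<gamma> i) (F2space m) (F2space m)"
    and zero: "parallel m b \<gamma> vzero = vzero"
    and U: "subspace (m * b) U" "sdim U = m * b - 1"
    and notJ: "\<forall>i<b. i \<notin> JU m b U \<longrightarrow>
                 diff_uniform m (\<gamma> i) (2 ^ r) \<and> r < m \<and> strongly_anti_invariant m (r - 1) (\<gamma> i)"
    and inJ: "\<forall>j\<in>JU m b U.
                 diff_uniform m (\<gamma> j) (2 ^ r) \<and> r < m - 1 \<and> strongly_anti_invariant m r (\<gamma> j)"
    and W1: "subspace (m * b) W1" "W1 \<subseteq> U"
    and W2: "subspace (m * b) W2" "W2 \<subseteq> U"
    and vbar: "vbar \<in> F2space (m * b) - U"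
    and W: "subspace (m * b) W" "\<not> trivial_partition (m * b) (cosets (m * b) W)"
    and maps: "maps_onto (parallel m b \<gamma>) (LA U W1 W2 vbar) (cosets (m * b) W)"
  shows "wall m b W1 \<and> wall m b W2 \<and> wall m b W \<and> W1 = W2 \<and> W2 = W
         \<and> LA U W1 W2 vbar = cosets (m * b) W1"
proof -
  define P where "P = parallel m b \<gamma>"
  define F where "F = F2space (m * b)"
  have m0: "0 < m" using assms(1) by simp
  have n0: "0 < m * b" using assms(1,2) by simp
  have gin: "\<And>j v. j < b \<Longrightarrow> v \<in> F2space m \<Longrightarrow> \<gamma> j v \<in> F2space m"
    using perm unfolding bij_betw_def by blast
  have ginj: "\<And>j. j < b \<Longrightarrow> inj_on (\<gamma> j) (F2space m)"
    using perm unfolding bij_betw_def by blast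
  have ginj': "\<And>j x y. j < b \<Longrightarrow> x \<in> F2space m \<Longrightarrow> y \<in> F2space m \<Longrightarrow> \<gamma> j x = \<gamma> j y \<Longrightarrow> x = y"
    using ginj unfolding inj_on_def by blast
  have cP: "\<And>j x. j < b \<Longrightarrow> component m j (P x) = \<gamma> j (component m j x)"
    unfolding P_def using comp_parallel gin comp_in by blast
  have g0: "\<And>j. j < b \<Longrightarrow> \<gamma> j vzero = vzero"
  proof -
    fix j assume j: "j < b"
    have "component m j (P vzero) = vzero" using zero by (simp add: P_def)
    then show "\<gamma> j vzero = vzero" using cP[OF j, of vzero] by simp
  qed
  have PF: "\<And>x. P x \<in> F" by (simp add: P_def F_def)
  have P0: "P vzero = vzero" using zero by (simp add: P_def)
  have Pinj: "inj_on P F"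
  proof (rule inj_onI)
    fix x y assume x: "x \<in> F" and y: "y \<in> F" and e: "P x = P y"
    have "\<forall>j<b. component m j x = component m j y"
    proof (intro allI impI)
      fix j assume j: "j < b"
      have "\<gamma> j (component m j x) = \<gamma> j (component m j y)" using cP[OF j, of x] cP[OF j, of y] e by simp
      then show "component m j x = component m j y" using ginj'[OF j comp_in comp_in] by blast
    qed
    then show "x = y" using vec_eq[OF m0] x y unfolding F_def by blast
  qed
  have UF: "U \<subseteq> F" and U0: "vzero \<in> U" and Uadd: "\<And>x y. x \<in> U \<Longrightarrow> y \<in> U \<Longrightarrow> vadd x y \<in> U"
    using U(1) unfolding subspace_def F_def by blast+
  have W1F: "W1 \<subseteq> F" and W10: "vzero \<in> W1" and W1add: "\<And>x y. x \<in> W1 \<Longrightarrow> y \<in> W1 \<Longrightarrow> vadd x y \<in> W1"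
    using W1(1) unfolding subspace_def F_def by blast+
  have W2F: "W2 \<subseteq> F" and W20: "vzero \<in> W2" and W2add: "\<And>x y. x \<in> W2 \<Longrightarrow> y \<in> W2 \<Longrightarrow> vadd x y \<in> W2"
    using W2(1) unfolding subspace_def F_def by blast+
  have WF: "W \<subseteq> F" and W0: "vzero \<in> W" and Wadd: "\<And>x y. x \<in> W \<Longrightarrow> y \<in> W \<Longrightarrow> vadd x y \<in> W"
    using W(1) unfolding subspace_def F_def by blast+
  have vbF: "vbar \<in> F" and vbU: "vbar \<notin> U" using vbar unfolding F_def by blast+
  have blocks: "\<And>X. X \<in> LA U W1 W2 vbar \<Longrightarrow> \<exists>c. P ` X = coset W c"
  proof -
    fix X assume "X \<in> LA U W1 W2 vbar"
    then have "P ` X \<in> cosets (m * b) W" using maps unfolding maps_onto_def P_def by blast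
    then show "\<exists>c. P ` X = coset W c" unfolding cosets_def by blast
  qed
  have PW1: "P ` W1 = W"
  proof -
    have "coset W1 vzero \<in> LA U W1 W2 vbar" using U0 unfolding LA_def by blast
    then obtain c where c: "P ` W1 = coset W c" using blocks by fastforce
    have "vzero \<in> P ` W1" using P0 W10 by force
    then show ?thesis using c coset_zero_eq[OF W(1)] by simp
  qed
  have D1: "\<And>x a. x \<in> U \<Longrightarrow> a \<in> W1 \<Longrightarrow> vadd (P (vadd x a)) (P x) \<in> W"
  proof -
    fix x a assume x: "x \<in> U" and a: "a \<in> W1"
    have "coset W1 x \<in> LA U W1 W2 vbar" using x unfolding LA_def by blast
    then obtain c where c: "P ` coset W1 x = coset W c" using blocks by blast
    have "x \<in> coset W1 x" using coset_mem[OF W10] .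
    moreover have "vadd x a \<in> coset W1 x" unfolding coset_def using a vadd_comm by blast
    ultimately have "P x \<in> coset W c" "P (vadd x a) \<in> coset W c" using c by blast+
    then show "vadd (P (vadd x a)) (P x) \<in> W" using coset_sum[OF W(1)] by blast
  qed
  obtain c2 where c2: "P ` coset W2 vbar = coset W c2"
  proof -
    have "coset (coset W2 vbar) vzero \<in> LA U W1 W2 vbar" using U0 unfolding LA_def by blast
    then show ?thesis using that blocks by fastforce
  qed
  have D2: "\<And>a. a \<in> W2 \<Longrightarrow> vadd (P (vadd vbar a)) (P vbar) \<in> W"
  proof -
    fix a assume a: "a \<in> W2"
    have "vbar \<in> coset W2 vbar" using coset_mem[OF W20] .
    moreover have "vadd vbar a \<in> coset W2 vbar" unfolding coset_def using a vadd_comm by blast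
    ultimately have "P vbar \<in> coset W c2" "P (vadd vbar a) \<in> coset W c2" using c2 by blast+
    then show "vadd (P (vadd vbar a)) (P vbar) \<in> W" using coset_sum[OF W(1)] by blast
  qed
  have cW1: "card W = card W1" using PW1 card_image[OF inj_on_subset[OF Pinj W1F]] by simp
  have cW2: "card W2 = card W"
  proof -
    have sub: "coset W2 vbar \<subseteq> F" using coset_subset[OF W2(1)] vbF unfolding F_def by blast
    have "card (P ` coset W2 vbar) = card (coset W2 vbar)" using card_image[OF inj_on_subset[OF Pinj sub]] .
    then show ?thesis using c2 card_coset by metis
  qed
  obtain kU where kU: "card U = 2 ^ kU" using subspace_card_pow[OF U(1)] by blast
  have "kU = m * b - 1" using sdim_eq[OF kU] U(2) by simp
  then have cU: "card U = 2 ^ (m * b - 1)" using kU by simp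
  have hyp: "\<And>x y. x \<in> F \<Longrightarrow> x \<notin> U \<Longrightarrow> y \<in> F \<Longrightarrow> y \<notin> U \<Longrightarrow> vadd x y \<in> U"
    using hyperplane[OF U(1) cU n0] unfolding F_def by blast
  define T where "T i = {t \<in> F2space m. emb m i t \<in> U}" for i
  have TF: "\<And>i. T i \<subseteq> F2space m" unfolding T_def by blast
  have Tnj: "\<And>i. i < b \<Longrightarrow> i \<notin> JU m b U \<Longrightarrow> T i = F2space m"
  proof -
    fix i assume i: "i < b" "i \<notin> JU m b U"
    then have "blk m i \<subseteq> U" unfolding JU_def by blast
    then show "T i = F2space m" unfolding T_def using emb_blk by blast
  qed
  have Tj: "\<And>i. i \<in> JU m b U \<Longrightarrow> 2 ^ m \<le> 2 * card (T i)"
  proof -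
    fix i assume iJ: "i \<in> JU m b U"
    then have i: "i < b" and ps: "blk m i \<inter> U \<subset> blk m i" unfolding JU_def by blast+
    then obtain v0 where v0: "v0 \<in> blk m i" "v0 \<notin> U" by blast
    define t0 where "t0 = component m i v0"
    have et0: "emb m i t0 = v0" using blk_emb[OF v0(1)] unfolding t0_def by simp
    define C where "C = F2space m - T i"
    have "(\<lambda>t. vadd t t0) ` C \<subseteq> T i"
    proof
      fix x assume "x \<in> (\<lambda>t. vadd t t0) ` C"
      then obtain t where t: "t \<in> F2space m" "emb m i t \<notin> U" "x = vadd t t0"
        unfolding C_def T_def by blast
      have v0F: "v0 \<in> F" unfolding F_def using emb_in[OF i, of m t0] et0 by simp
      have etF: "emb m i t \<in> F" unfolding F_def using emb_in[OF i, of m t] by simp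
      have "vadd (emb m i t) (emb m i t0) \<in> U"
        using hyp[OF etF t(2) v0F v0(2)] et0 by simp
      then have "emb m i x \<in> U" using t(3) by (simp add: emb_vadd)
      moreover have "x \<in> F2space m" using t F2space_vadd comp_in unfolding t0_def by simp
      ultimately show "x \<in> T i" unfolding T_def by blast
    qed
    note img = this
    have inj: "inj_on (\<lambda>t. vadd t t0) C"
    proof (rule inj_onI)
      fix x y assume "vadd x t0 = vadd y t0"
      then have "vadd (vadd x t0) t0 = vadd (vadd y t0) t0" by simp
      then show "x = y" by simp
    qed
    have finT: "finite (T i)" using finite_subset[OF TF finite_F2space] .
    have "card C \<le> card (T i)" by (rule card_inj_on_le[OF inj img finT])
    moreover have "card (F2space m) = card (T i) + card C"
      unfolding C_def using card_Diff_subset[OF finite_subset[OF TF finite_F2space] TF]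
        card_mono[OF finite_F2space TF] by simp
    ultimately show "2 ^ m \<le> 2 * card (T i)" using card_F2space[of m] by simp
  qed
  have pre: "\<And>i u. i < b \<Longrightarrow> u \<in> F2space m \<Longrightarrow> emb m i u \<in> W \<Longrightarrow>
      \<exists>t\<in>F2space m. emb m i t \<in> W1 \<and> \<gamma> i t = u"
  proof -
    fix i u assume i: "i < b" and u: "u \<in> F2space m" "emb m i u \<in> W"
    have "emb m i u \<in> P ` W1" using u(2) PW1 by simp
    then obtain w where w1: "w \<in> W1" and w2': "emb m i u = P w" by (rule imageE)
    have w: "w \<in> W1" "P w = emb m i u" using w1 w2' by simp_all
    have wF: "w \<in> F2space (m * b)" using w1 W1F unfolding F_def by blast
    define t where "t = component m i w"
    have "\<forall>j<b. component m j w = component m j (emb m i t)"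
    proof (intro allI impI)
      fix j assume j: "j < b"
      show "component m j w = component m j (emb m i t)"
      proof (cases "j = i")
        case True then show ?thesis by (simp add: t_def comp_emb)
      next
        case False
        have "\<gamma> j (component m j w) = component m j (P w)" using cP[OF j] by simp
        also have "\<dots> = vzero" using w(2) False by (simp add: comp_emb_other)
        also have "\<dots> = \<gamma> j vzero" using g0[OF j] by simp
        finally have "component m j w = vzero" by (rule ginj'[OF j comp_in F2space_vzero])
        then show ?thesis using False by (simp add: comp_emb_other)
      qed
    qed
    then have we: "w = emb m i t" by (rule vec_eq[OF m0 wF emb_in[OF i]])
    have "\<gamma> i t = component m i (P w)" using cP[OF i] by (simp add: t_def)
    also have "\<dots> = u" using w(2) u(1) by (simp add: comp_emb)
    finally have gu: "\<gamma> i t = u" .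
    have "t \<in> F2space m" unfolding t_def by simp
    moreover have "emb m i t \<in> W1" using we w(1) by simp
    ultimately show "\<exists>t\<in>F2space m. emb m i t \<in> W1 \<and> \<gamma> i t = u" using gu by blast
  qed
  have Pemb: "\<And>i t. i < b \<Longrightarrow> t \<in> F2space m \<Longrightarrow> P (emb m i t) = emb m i (\<gamma> i t)"
  proof -
    fix i t assume i: "i < b" and t: "t \<in> F2space m"
    have g0': "\<forall>j<b. \<gamma> j vzero = vzero" using g0 by blast
    have gin': "\<forall>j<b. \<forall>v\<in>F2space m. \<gamma> j v \<in> F2space m" using gin by blast
    show "P (emb m i t) = emb m i (\<gamma> i t)" unfolding P_def by (rule parallel_emb[OF m0 i t g0' gin'])
  qed
  have claim1: "\<And>i \<alpha>. i < b \<Longrightarrow> \<alpha> \<in> F2space m \<Longrightarrow> \<alpha> \<noteq> vzero \<Longrightarrow> emb m i \<alpha> \<in> W1 \<Longrightarrow> blk m i \<subseteq> W1"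
  proof -
    fix i \<alpha> assume i: "i < b" and al: "\<alpha> \<in> F2space m" "\<alpha> \<noteq> vzero" "emb m i \<alpha> \<in> W1"
    define K where "K = {t \<in> F2space m. emb m i t \<in> W1}"
    define L where "L = {t \<in> F2space m. emb m i t \<in> W}"
    have K: "subspace m K" unfolding subspace_def K_def
      using W10 W1add F2space_vadd by (auto simp: emb_vadd)
    have L: "subspace m L" unfolding subspace_def L_def
      using W0 Wadd F2space_vadd by (auto simp: emb_vadd)
    have fKL: "\<gamma> i ` K = L"
    proof
      show "\<gamma> i ` K \<subseteq> L"
      proof
        fix u assume "u \<in> \<gamma> i ` K"
        then obtain t where t: "t \<in> F2space m" "emb m i t \<in> W1" "u = \<gamma> i t" unfolding K_def by blast
        have "emb m i u = P (emb m i t)" using Pemb[OF i t(1)] t(3) by simp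
        then have "emb m i u \<in> W" using PW1 t(2) by blast
        moreover have "u \<in> F2space m" using gin[OF i t(1)] t(3) by simp
        ultimately show "u \<in> L" unfolding L_def by blast
      qed
      show "L \<subseteq> \<gamma> i ` K"
      proof
        fix u assume "u \<in> L"
        then have u: "u \<in> F2space m" "emb m i u \<in> W" unfolding L_def by blast+
        obtain t where "t \<in> F2space m" "emb m i t \<in> W1" "\<gamma> i t = u" using pre[OF i u] by blast
        then show "u \<in> \<gamma> i ` K" unfolding K_def by blast
      qed
    qed
    have D: "\<forall>t\<in>T i. vadd (\<gamma> i (vadd t \<alpha>)) (\<gamma> i t) \<in> L"
    proof
      fix t assume t: "t \<in> T i"
      then have tF: "t \<in> F2space m" and tU: "emb m i t \<in> U" unfolding T_def by blast+
      have taF: "vadd t \<alpha> \<in> F2space m" using tF al(1) by (rule F2space_vadd)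
      have "vadd (P (vadd (emb m i t) (emb m i \<alpha>))) (P (emb m i t)) \<in> W"
        using D1[OF tU al(3)] .
      also have "vadd (P (vadd (emb m i t) (emb m i \<alpha>))) (P (emb m i t))
          = emb m i (vadd (\<gamma> i (vadd t \<alpha>)) (\<gamma> i t))"
        using Pemb[OF i tF] Pemb[OF i taF] by (simp add: emb_vadd)
      finally have "emb m i (vadd (\<gamma> i (vadd t \<alpha>)) (\<gamma> i t)) \<in> W" .
      moreover have "vadd (\<gamma> i (vadd t \<alpha>)) (\<gamma> i t) \<in> F2space m"
        using gin[OF i tF] gin[OF i taF] F2space_vadd by blast
      ultimately show "vadd (\<gamma> i (vadd t \<alpha>)) (\<gamma> i t) \<in> L" unfolding L_def by blast
    qed
    have alK: "\<alpha> \<in> K" using al unfolding K_def by blast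
    have ginto: "\<forall>v\<in>F2space m. \<gamma> i v \<in> F2space m" using gin[OF i] by blast
    have KF: "K = F2space m"
    proof (cases "i \<in> JU m b U")
      case True
      then have du: "diff_uniform m (\<gamma> i) (2 ^ r)" and sai: "strongly_anti_invariant m r (\<gamma> i)"
        using inJ by blast+
      have big: "2 ^ m \<le> card (T i) * 2 ^ (r + 1 - r)" using Tj[OF True] by simp
      show ?thesis
        by (rule claim1_core[OF ginj[OF i] ginto du K L fKL sai TF alK al(2) D big]) simp
    next
      case False
      then have du: "diff_uniform m (\<gamma> i) (2 ^ r)" and sai: "strongly_anti_invariant m (r - 1) (\<gamma> i)"
        using notJ i by blast+
      have "card (T i) = 2 ^ m" using Tnj[OF i False] card_F2space by simp
      then have big: "2 ^ m \<le> card (T i) * 2 ^ (r - 1 + 1 - r)" by simp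
      show ?thesis
        by (rule claim1_core[OF ginj[OF i] ginto du K L fKL sai TF alK al(2) D big]) simp
    qed
    show "blk m i \<subseteq> W1"
    proof
      fix v assume v: "v \<in> blk m i"
      have "component m i v \<in> K" using KF by simp
      then have "emb m i (component m i v) \<in> W1" unfolding K_def by blast
      then show "v \<in> W1" using blk_emb[OF v] by simp
    qed
  qed
  have claim2: "\<And>w i. w \<in> W1 \<Longrightarrow> i < b \<Longrightarrow> component m i w \<noteq> vzero \<Longrightarrow> blk m i \<subseteq> W1"
  proof (rule ccontr)
    fix w i assume w: "w \<in> W1" and i: "i < b" and wi: "component m i w \<noteq> vzero"
      and nb: "\<not> blk m i \<subseteq> W1"
    have wF: "w \<in> F" using w W1F by blast
    have L0: "\<And>u. u \<in> F2space m \<Longrightarrow> emb m i u \<in> W \<Longrightarrow> u = vzero"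
    proof -
      fix u assume u: "u \<in> F2space m" "emb m i u \<in> W"
      obtain t where t: "t \<in> F2space m" "emb m i t \<in> W1" "\<gamma> i t = u" using pre[OF i u] by blast
      have "t = vzero" using claim1[OF i t(1) _ t(2)] nb by blast
      then show "u = vzero" using t(3) g0[OF i] by simp
    qed
    define \<alpha> where "\<alpha> = component m i w"
    have alF: "\<alpha> \<in> F2space m" unfolding \<alpha>_def by simp
    have D: "\<forall>t\<in>T i. vadd (\<gamma> i (vadd t \<alpha>)) (\<gamma> i t) = \<gamma> i \<alpha>"
    proof
      fix t assume t: "t \<in> T i"
      then have tF: "t \<in> F2space m" and tU: "emb m i t \<in> U" unfolding T_def by blast+
      define x where "x = emb m i t"
      have xF: "x \<in> F2space (m * b)" unfolding x_def by (rule emb_in[OF i])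
      define z where "z = vadd (vadd (P (vadd x w)) (P x)) (P w)"
      have "P w \<in> W" using PW1 w by blast
      then have zW: "z \<in> W" unfolding z_def using Wadd D1[OF tU w] unfolding x_def by blast
      define \<delta> where "\<delta> = vadd (vadd (\<gamma> i (vadd t \<alpha>)) (\<gamma> i t)) (\<gamma> i \<alpha>)"
      have zF: "z \<in> F2space (m * b)" unfolding z_def using PF F2space_vadd unfolding F_def by blast
      have "\<forall>j<b. component m j z = component m j (emb m i \<delta>)"
      proof (intro allI impI)
        fix j assume j: "j < b"
        have cz: "component m j z = vadd (vadd (\<gamma> j (vadd (component m j x) (component m j w)))
                    (\<gamma> j (component m j x))) (\<gamma> j (component m j w))"
          unfolding z_def using cP[OF j] by (simp add: comp_vadd)
        show "component m j z = component m j (emb m i \<delta>)"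
        proof (cases "j = i")
          case True
          have "component m i x = t" unfolding x_def using tF by (simp add: comp_emb)
          moreover have "\<delta> \<in> F2space m" unfolding \<delta>_def using gin[OF i] F2space_vadd alF tF by simp
          ultimately show ?thesis using cz True by (simp add: comp_emb \<delta>_def \<alpha>_def)
        next
          case False
          have "component m j x = vzero" unfolding x_def using False by (simp add: comp_emb_other)
          then have "component m j z = vzero" using cz g0[OF j] by (simp add: vadd_comm)
          then show ?thesis using False by (simp add: comp_emb_other)
        qed
      qed
      then have "z = emb m i \<delta>" by (rule vec_eq[OF m0 zF emb_in[OF i]])
      then have "\<delta> = vzero" using L0 zW unfolding \<delta>_def using gin[OF i] F2space_vadd alF tF by simp
      then show "vadd (\<gamma> i (vadd t \<alpha>)) (\<gamma> i t) = \<gamma> i \<alpha>" unfolding \<delta>_def by (simp add: vadd_eq_zero_iff)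
    qed
    have du: "diff_uniform m (\<gamma> i) (2 ^ r)" using notJ inJ i by blast
    have cT: "card (T i) \<le> 2 ^ r"
      by (rule claim2_core[OF du alF _ gin[OF i alF] TF D]) (use wi \<alpha>_def in simp)
    show False
    proof (cases "i \<in> JU m b U")
      case True
      then have "r + 1 < m" using inJ by auto
      then have "(2::nat) ^ (r + 1) < 2 ^ m" using power_strict_increasing_iff[of "2::nat" "r + 1" m] by simp
      then show False using Tj[OF True] cT by simp
    next
      case False
      then have "r < m" using notJ i by blast
      then have "(2::nat) ^ r < 2 ^ m" using power_strict_increasing_iff[of "2::nat" r m] by simp
      then show False using Tnj[OF i False] cT card_F2space[of m] by simp
    qed
  qed
  define I where "I = {i. i < b \<and> blk m i \<subseteq> W1}"
  define WI where "WI = {v \<in> F2space (m * b). \<forall>k. v k \<longrightarrow> k div m \<in> I}"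
  have Ib: "I \<subseteq> {..<b}" unfolding I_def by blast
  have finI: "finite I" using finite_subset[OF Ib] by simp
  have compI: "\<And>v i. v \<in> WI \<Longrightarrow> i \<notin> I \<Longrightarrow> component m i v = vzero"
  proof -
    fix v i assume v: "v \<in> WI" and i: "i \<notin> I"
    show "component m i v = vzero"
    proof
      fix t
      show "component m i v t = vzero t"
      proof (cases "t < m \<and> v (i * m + t)")
        case True
        then have "(i * m + t) div m = i" by (intro bounds_div_eq) auto
        then show ?thesis using True v i unfolding WI_def by auto
      next
        case False
        then show ?thesis by (auto simp: component_def vzero_def)
      qed
    qed
  qed
  have supp: "\<And>v k. v \<in> F \<Longrightarrow> v k \<Longrightarrow> k div m < b \<and> component m (k div m) v \<noteq> vzero"
  proof -
    fix v k assume v: "v \<in> F" and vk: "v k"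
    have "k < m * b" using v vk unfolding F_def F2space_def using not_le by blast
    then have "k div m < b" using m0 by (simp add: div_less_iff_less_mult mult.commute)
    moreover have "component m (k div m) v (k mod m)" using comp_at[OF m0] vk by simp
    then have "component m (k div m) v \<noteq> vzero" by (auto simp: vzero_def)
    ultimately show "k div m < b \<and> component m (k div m) v \<noteq> vzero" by blast
  qed
  have W1eq: "W1 = WI"
  proof
    show "W1 \<subseteq> WI"
    proof
      fix w assume w: "w \<in> W1"
      then have wF: "w \<in> F" using W1F by blast
      have "\<forall>k. w k \<longrightarrow> k div m \<in> I"
      proof (intro allI impI)
        fix k assume "w k"
        then have "k div m < b" "component m (k div m) w \<noteq> vzero" using supp[OF wF] by blast+
        then show "k div m \<in> I" using claim2[OF w] unfolding I_def by blast
      qed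
      then show "w \<in> WI" using wF unfolding WI_def F_def by blast
    qed
    show "WI \<subseteq> W1"
    proof
      fix v assume v: "v \<in> WI"
      have "\<forall>i\<in>I. blk m i \<subseteq> W1" unfolding I_def by blast
      moreover have "v \<in> F2space (m * b)" "\<forall>k. v k \<longrightarrow> k div m \<in> I" using v unfolding WI_def by blast+
      ultimately show "v \<in> W1" using wall_sub[OF m0 W1(1) finI] by blast
    qed
  qed
  have finWI: "finite WI" unfolding WI_def by simp
  have WeqI: "W = WI"
  proof -
    have "W \<subseteq> WI"
    proof
      fix u assume u: "u \<in> W"
      then obtain w where w: "w \<in> W1" "u = P w" using PW1 by blast
      have uF: "u \<in> F" using u WF by blast
      have "\<forall>k. u k \<longrightarrow> k div m \<in> I"
      proof (intro allI impI)
        fix k assume "u k"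
        then have kb: "k div m < b" and nz: "component m (k div m) u \<noteq> vzero" using supp[OF uF] by blast+
        show "k div m \<in> I"
        proof (rule ccontr)
          assume "k div m \<notin> I"
          then have "component m (k div m) w = vzero" using compI w(1) W1eq by blast
          then have "component m (k div m) u = vzero" using w(2) cP[OF kb] g0[OF kb] by simp
          then show False using nz by simp
        qed
      qed
      then show "u \<in> WI" using uF unfolding WI_def F_def by blast
    qed
    moreover have "card W = card WI" using cW1 W1eq by simp
    ultimately show ?thesis using card_subset_eq[OF finWI] by blast
  qed
  have W2eq: "W2 = WI"
  proof -
    have "W2 \<subseteq> WI"
    proof
      fix a assume a: "a \<in> W2"
      have aF: "a \<in> F" using a W2F by blast
      have "\<forall>k. a k \<longrightarrow> k div m \<in> I"
      proof (intro allI impI)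
        fix k assume "a k"
        then have kb: "k div m < b" and nz: "component m (k div m) a \<noteq> vzero" using supp[OF aF] by blast+
        show "k div m \<in> I"
        proof (rule ccontr)
          assume nI: "k div m \<notin> I"
          define j where "j = k div m"
          have jb: "j < b" using kb unfolding j_def .
          have "vadd (P (vadd vbar a)) (P vbar) \<in> WI" using D2[OF a] WeqI by simp
          then have "component m j (vadd (P (vadd vbar a)) (P vbar)) = vzero" using compI nI unfolding j_def by blast
          then have "\<gamma> j (component m j (vadd vbar a)) = \<gamma> j (component m j vbar)"
            using cP[OF jb] by (simp add: comp_vadd vadd_eq_zero_iff)
          then have "component m j (vadd vbar a) = component m j vbar"
            using ginj'[OF jb comp_in comp_in] by blast
          then have "vadd (component m j vbar) (component m j a) = component m j vbar" by (simp add: comp_vadd)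
          then have "vadd (component m j vbar) (vadd (component m j vbar) (component m j a)) = vzero" by simp
          then have "component m j a = vzero" by simp
          then show False using nz unfolding j_def by simp
        qed
      qed
      then show "a \<in> WI" using aF unfolding WI_def F_def by blast
    qed
    moreover have "card W2 = card WI" using cW2 WeqI by simp
    ultimately show ?thesis using card_subset_eq[OF finWI] by blast
  qed
  have Ine: "I \<noteq> {}"
  proof
    assume "I = {}"
    then have "WI = {vzero}" unfolding WI_def using F2space_vzero[of "m * b"] by (auto simp: vzero_def fun_eq_iff)
    then have "cosets (m * b) W = {{v} | v. v \<in> F2space (m * b)}"
      using WeqI unfolding cosets_def by (simp add: coset_single)
    then show False using W(2) unfolding trivial_partition_def by blast
  qed
  have Inf: "I \<noteq> {..<b}"
  proof
    assume Iall: "I = {..<b}"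
    have "WI = F2space (m * b)"
    proof
      show "WI \<subseteq> F2space (m * b)" unfolding WI_def by blast
      show "F2space (m * b) \<subseteq> WI"
      proof
        fix v assume v: "v \<in> F2space (m * b)"
        have "\<forall>k. v k \<longrightarrow> k div m \<in> I" using supp v Iall unfolding F_def by blast
        then show "v \<in> WI" using v unfolding WI_def by blast
      qed
    qed
    then have WFe: "W = F2space (m * b)" using WeqI by simp
    have "cosets (m * b) W = {F2space (m * b)}"
    proof
      show "cosets (m * b) W \<subseteq> {F2space (m * b)}"
        unfolding cosets_def WFe using coset_full by blast
      show "{F2space (m * b)} \<subseteq> cosets (m * b) W"
        unfolding cosets_def WFe using coset_full[OF F2space_vzero] F2space_vzero by blast
    qed
    then show False using W(2) unfolding trivial_partition_def by blast
  qed
  have wallI: "wall m b WI" unfolding wall_def WI_def using Ine Inf Ib by blast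
  have LAeq: "LA U W1 W2 vbar = cosets (m * b) W1"
  proof
    show "LA U W1 W2 vbar \<subseteq> cosets (m * b) W1"
    proof
      fix X assume "X \<in> LA U W1 W2 vbar"
      then consider (a) v where "v \<in> U" "X = coset W1 v" | (b) v where "v \<in> U" "X = coset (coset W2 vbar) v"
        unfolding LA_def by blast
      then show "X \<in> cosets (m * b) W1"
      proof cases
        case a
        then show ?thesis using UF unfolding cosets_def F_def by blast
      next
        case b
        then have "X = coset W1 (vadd vbar v)" using W1eq W2eq by (simp add: coset_coset)
        moreover have "vadd vbar v \<in> F2space (m * b)" using b(1) UF vbF F2space_vadd unfolding F_def by blast
        ultimately show ?thesis unfolding cosets_def by blast
      qed
    qed
    show "cosets (m * b) W1 \<subseteq> LA U W1 W2 vbar"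
    proof
      fix X assume "X \<in> cosets (m * b) W1"
      then obtain v where v: "v \<in> F" "X = coset W1 v" unfolding cosets_def F_def by blast
      show "X \<in> LA U W1 W2 vbar"
      proof (cases "v \<in> U")
        case True
        then show ?thesis using v unfolding LA_def by blast
      next
        case False
        have v': "vadd vbar v \<in> U" using hyp[OF vbF vbU v(1) False] .
        have "coset (coset W2 vbar) (vadd vbar v) = coset W1 v"
          using W1eq W2eq by (simp add: coset_coset flip: vadd_assoc)
        then show ?thesis using v' v(2) unfolding LA_def by blast
      qed
    qed
  qed
  show ?thesis using W1eq W2eq WeqI wallI LAeq by simp
qed


end
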